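(* Let $L\in\mathbb{Z}_{>0}$ and let $\mathcal{Z}(\lambda_1,\dots,\lambda_L)=\langle\bar 0|\mathcal{B}(\lambda_1)\cdots\mathcal{B}(\lambda_L)|0\rangle$ be the partition function of the six-vertex model with one reflecting end and domain-wall boundaries (see context). Then, writing $x_i=e^{2\lambda_i}$, one has $\mathcal{Z}(\lambda_1,\dots,\lambda_L)=\bar{\mathcal{Z}}(x_1,\dots,x_L)\prod_{i=1}^{L}x_i^{-L}$, where $\bar{\mathcal{Z}}(x_1,\dots,x_L)$ is a polynomial of degree $2L$ in each of its variables $x_i$.
   Context: Parameters $\gamma,h,\mu_1,\dots,\mu_L\in\mathbb{C}$. Set $a(\lambda)=\sinh(\lambda+\gamma)$, $b(\lambda)=\sinh(\lambda)$, $c(\lambda)=\sinh(\gamma)$. The $R$-matrix $\mathcal{R}(\lambda)\in\mathrm{End}(\mathbb{C}^2\otimes\mathbb{C}^2)$ is, in the basis $e_1\otimes e_1,e_1\otimes e_2,e_2\otimes e_1,e_2\otimes e_2$, the matrix with rows $(a,0,0,0)$, $(0,b,c,0)$, $(0,c,b,0)$, $(0,0,0,a)$ evaluated at $\lambda$. Let $\mathbb{V}_0\cong\mathbb{C}^2$ and $\mathbb{V}_{\mathcal{Q}}=(\mathbb{C}^2)^{\otimes L}$; $\mathcal{R}_{0j}$ acts on $\mathbb{V}_0$ and the $j$-th factor of $\mathbb{V}_{\mathcal{Q}}$. Define $\tau(\lambda)=\mathcal{R}_{0L}(\lambda-\mu_L)\cdots\mathcal{R}_{01}(\lambda-\mu_1)$,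 $\bar\tau(\lambda)=\mathcal{R}_{01}(\lambda+\mu_1)\cdots\mathcal{R}_{0L}(\lambda+\mu_L)$, $\mathcal{K}(\lambda)=\mathrm{diag}(\sinh(h+\lambda),\sinh(h-\lambda))$ on $\mathbb{V}_0$, and $\mathcal{T}(\lambda)=\tau(\lambda)\mathcal{K}(\lambda)\bar\tau(\lambda)=\begin{pmatrix}\mathcal{A}(\lambda)&\mathcal{B}(\lambda)\\ \mathcal{C}(\lambda)&\mathcal{D}(\lambda)\end{pmatrix}$ in $\mathbb{V}_0$, with entries in $\mathrm{End}(\mathbb{V}_{\mathcal{Q}})$. Let $|0\rangle=e_1^{\otimes L}$ and $\langle\bar 0|$ the transpose of $e_2^{\otimes L}$, $e_1=(1,0)^T$, $e_2=(0,1)^T$. *)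

theory Defs
  imports "HOL-Analysis.Analysis"
begin

text \<open>Basis index convention: 0 stands for e_1, 1 stands for e_2.
  A basis vector of V_Q = (C^2)^{tensor L} is a function s in {1..L} ->_E {0,1},
  s j being the state at site j.  Operators on V_0 (x) V_Q are given by their
  matrix entries  M a s a' s'  (row (a,s), column (a',s')).\<close>

type_synonym qstate = "nat \<Rightarrow> nat"
type_synonym op0Q = "nat \<Rightarrow> qstate \<Rightarrow> nat \<Rightarrow> qstate \<Rightarrow> complex"
type_synonym opQ = "qstate \<Rightarrow> qstate \<Rightarrow> complex"

definition qstates :: "nat \<Rightarrow> qstate set" where
  "qstates L = ({1..L} \<rightarrow>\<^sub>E {0::nat, 1})"

definition Rmat :: "complex \<Rightarrow> complex \<Rightarrow> nat \<Rightarrow> nat \<Rightarrow> nat \<Rightarrow> nat \<Rightarrow> complex" where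
  "Rmat \<gamma> lm i j k l =
     (if i = j \<and> j = k \<and> k = l then sinh (lm + \<gamma>)
      else if i \<noteq> j \<and> i = k \<and> j = l then sinh lm
      else if i \<noteq> j \<and> i = l \<and> j = k then sinh \<gamma>
      else 0)"

definition R0j :: "nat \<Rightarrow> complex \<Rightarrow> nat \<Rightarrow> complex \<Rightarrow> op0Q" where
  "R0j L \<gamma> j lm a s a' s' =
     Rmat \<gamma> lm a (s j) a' (s' j) * (if \<forall>k\<in>{1..L} - {j}. s k = s' k then 1 else 0)"

definition opmul :: "nat \<Rightarrow> op0Q \<Rightarrow> op0Q \<Rightarrow> op0Q" where
  "opmul L A B a s a' s' = (\<Sum>b\<in>{0::nat,1}. \<Sum>t\<in>qstates L. A a s b t * B b t a' s')"

definition opid :: op0Q where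
  "opid a s a' s' = (if a = a' \<and> s = s' then 1 else 0)"

fun tau_aux :: "nat \<Rightarrow> complex \<Rightarrow> (nat \<Rightarrow> complex) \<Rightarrow> complex \<Rightarrow> nat \<Rightarrow> op0Q" where
  "tau_aux L \<gamma> \<mu> lm 0 = opid"
| "tau_aux L \<gamma> \<mu> lm (Suc n) =
     opmul L (R0j L \<gamma> (Suc n) (lm - \<mu> (Suc n))) (tau_aux L \<gamma> \<mu> lm n)"

fun taubar_aux :: "nat \<Rightarrow> complex \<Rightarrow> (nat \<Rightarrow> complex) \<Rightarrow> complex \<Rightarrow> nat \<Rightarrow> op0Q" where
  "taubar_aux L \<gamma> \<mu> lm 0 = opid"
| "taubar_aux L \<gamma> \<mu> lm (Suc n) =
     opmul L (taubar_aux L \<gamma> \<mu> lm n) (R0j L \<gamma> (Suc n) (lm + \<mu> (Suc n)))"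

definition tau :: "nat \<Rightarrow> complex \<Rightarrow> (nat \<Rightarrow> complex) \<Rightarrow> complex \<Rightarrow> op0Q" where
  "tau L \<gamma> \<mu> lm = tau_aux L \<gamma> \<mu> lm L"

definition taubar :: "nat \<Rightarrow> complex \<Rightarrow> (nat \<Rightarrow> complex) \<Rightarrow> complex \<Rightarrow> op0Q" where
  "taubar L \<gamma> \<mu> lm = taubar_aux L \<gamma> \<mu> lm L"

definition Kop :: "complex \<Rightarrow> complex \<Rightarrow> op0Q" where
  "Kop h lm a s a' s' =
     (if a = a' \<and> s = s' then (if a = 0 then sinh (h + lm) else sinh (h - lm)) else 0)"

definition Tmon :: "nat \<Rightarrow> complex \<Rightarrow> complex \<Rightarrow> (nat \<Rightarrow> complex) \<Rightarrow> complex \<Rightarrow> op0Q" where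
  "Tmon L \<gamma> h \<mu> lm = opmul L (opmul L (tau L \<gamma> \<mu> lm) (Kop h lm)) (taubar L \<gamma> \<mu> lm)"

definition Bop :: "nat \<Rightarrow> complex \<Rightarrow> complex \<Rightarrow> (nat \<Rightarrow> complex) \<Rightarrow> complex \<Rightarrow> opQ" where
  "Bop L \<gamma> h \<mu> lm s s' = Tmon L \<gamma> h \<mu> lm 0 s 1 s'"

definition qmul :: "nat \<Rightarrow> opQ \<Rightarrow> opQ \<Rightarrow> opQ" where
  "qmul L A B s s' = (\<Sum>t\<in>qstates L. A s t * B t s')"

definition qid :: opQ where
  "qid s s' = (if s = s' then 1 else 0)"

fun Bprod :: "nat \<Rightarrow> complex \<Rightarrow> complex \<Rightarrow> (nat \<Rightarrow> complex) \<Rightarrow> (nat \<Rightarrow> complex) \<Rightarrow> nat \<Rightarrow> opQ" where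
  "Bprod L \<gamma> h \<mu> lam 0 = qid"
| "Bprod L \<gamma> h \<mu> lam (Suc n) = qmul L (Bprod L \<gamma> h \<mu> lam n) (Bop L \<gamma> h \<mu> (lam (Suc n)))"

text \<open>Z(lambda_1,...,lambda_L) = <0bar| B(lambda_1) ... B(lambda_L) |0>,
  |0> = e_1^{(x)L}, <0bar| = transpose of e_2^{(x)L}\<close>
definition Zpf :: "nat \<Rightarrow> complex \<Rightarrow> complex \<Rightarrow> (nat \<Rightarrow> complex) \<Rightarrow> (nat \<Rightarrow> complex) \<Rightarrow> complex" where
  "Zpf L \<gamma> h \<mu> lam = Bprod L \<gamma> h \<mu> lam L (restrict (\<lambda>j. 1) {1..L}) (restrict (\<lambda>j. 0) {1..L})"

end

theory Submission
  imports Defs "HOL-Computational_Algebra.Polynomial"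
begin

definition Cls :: "int \<Rightarrow> (complex \<Rightarrow> complex) \<Rightarrow> bool" where
  "Cls N f \<longleftrightarrow> f = (\<lambda>_. 0) \<or>
     (\<exists>p::complex poly. int (degree p) \<le> N \<and> (\<forall>x. f x = poly p (exp x ^ 2) / exp x ^ nat N))"

lemma cls_zero: "Cls N (\<lambda>_. 0)" by (simp add: Cls_def)

lemma cls_const: "Cls 0 (\<lambda>_. c)"
  unfolding Cls_def by (rule disjI2, rule exI[of _ "[:c:]"]) simp

lemma cls_add:
  assumes "Cls N f" "Cls N g" shows "Cls N (\<lambda>x. f x + g x)"
proof -
  consider "f = (\<lambda>_. 0)" | "g = (\<lambda>_. 0)" | p q :: "complex poly" where "int (degree p) \<le> N" "\<forall>x. f x = poly p (exp x ^ 2) / exp x ^ nat N"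
     "int (degree q) \<le> N" "\<forall>x. g x = poly q (exp x ^ 2) / exp x ^ nat N"
    using assms unfolding Cls_def by blast
  then show ?thesis
  proof cases
    case 1 then show ?thesis using assms by simp
  next
    case 2 then show ?thesis using assms by simp
  next
    case 3
    have "int (degree (p + q)) \<le> N"
      using degree_add_le_max[of p q] 3 by linarith
    moreover have "\<forall>x. f x + g x = poly (p + q) (exp x ^ 2) / exp x ^ nat N"
      using 3 by (simp add: add_divide_distrib)
    ultimately show ?thesis unfolding Cls_def by blast
  qed
qed

lemma cls_sum: "finite S \<Longrightarrow> (\<And>t. t \<in> S \<Longrightarrow> Cls N (F t)) \<Longrightarrow> Cls N (\<lambda>x. \<Sum>t\<in>S. F t x)"
proof (induction S rule: finite_induct)
  case empty then show ?case by (simp add: cls_zero)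
next
  case (insert a S)
  then show ?case by (simp add: cls_add)
qed

lemma cls_scale: assumes "Cls N f" shows "Cls N (\<lambda>x. c * f x)"
proof -
  consider "f = (\<lambda>_. 0)" | p where "int (degree p) \<le> N" "\<forall>x. f x = poly p (exp x ^ 2) / exp x ^ nat N"
    using assms unfolding Cls_def by blast
  then show ?thesis
  proof cases
    case 1 then show ?thesis by (simp add: cls_zero)
  next
    case 2
    have "int (degree (smult c p)) \<le> N" using 2 degree_smult_le[of c p] by linarith
    moreover have "\<forall>x. c * f x = poly (smult c p) (exp x ^ 2) / exp x ^ nat N" using 2 by simp
    ultimately show ?thesis unfolding Cls_def by blast
  qed
qed

lemma cls_mult: assumes "Cls N f" "Cls M g" shows "Cls (N + M) (\<lambda>x. f x * g x)"
proof -
  consider "f = (\<lambda>_. 0)" | "g = (\<lambda>_. 0)" | p q where "int (degree p) \<le> N" "\<forall>x. f x = poly p (exp x ^ 2) / exp x ^ nat N"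
     "int (degree q) \<le> M" "\<forall>x. g x = poly q (exp x ^ 2) / exp x ^ nat M"
    using assms unfolding Cls_def by blast
  then show ?thesis
  proof cases
    case 1 then show ?thesis by (simp add: cls_zero)
  next
    case 2 then show ?thesis by (simp add: cls_zero)
  next
    case 3
    have N: "N \<ge> 0" "M \<ge> 0" using 3 by linarith+
    have "int (degree (p * q)) \<le> N + M"
      using degree_mult_le[of p q] 3 by linarith
    moreover have "nat (N + M) = nat N + nat M" using N by simp
    moreover have "\<forall>x. f x * g x = poly (p * q) (exp x ^ 2) / exp x ^ (nat N + nat M)"
      using 3 by (simp add: power_add)
    ultimately show ?thesis unfolding Cls_def by metis
  qed
qed

lemma aux_raise: "poly p (exp (x::complex) ^ 2) / exp x ^ n = exp x ^ 2 * poly p (exp x ^ 2) / exp x ^ (n + 2)"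
proof -
  have pw: "exp x ^ (n + 2) = exp x ^ 2 * exp x ^ n" by (simp add: power_add power2_eq_square mult_ac)
  have "exp x ^ 2 * poly p (exp x ^ 2) / exp x ^ (n + 2) = exp x ^ 2 * poly p (exp x ^ 2) / (exp x ^ 2 * exp x ^ n)"
    by (simp only: pw)
  also have "\<dots> = poly p (exp x ^ 2) / exp x ^ n"
    using nonzero_mult_divide_mult_cancel_left[of "exp x ^ 2" "poly p (exp x ^ 2)" "exp x ^ n"] by simp
  finally show ?thesis by (rule sym)
qed

lemma cls_raise: assumes "Cls N f" shows "Cls (N + 2) f"
proof -
  consider "f = (\<lambda>_. 0)" | p where "int (degree p) \<le> N" "\<forall>x. f x = poly p (exp x ^ 2) / exp x ^ nat N"
    using assms unfolding Cls_def by blast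
  then show ?thesis
  proof cases
    case 1 then show ?thesis by (simp add: cls_zero)
  next
    case 2
    have N: "N \<ge> 0" using 2 by linarith
    have "int (degree (pCons 0 p)) \<le> N + 2"
      using 2 by (cases "p = 0") auto
    moreover have "nat (N + 2) = nat N + 2" using N by simp
    moreover have "\<forall>x. f x = poly (pCons 0 p) (exp x ^ 2) / exp x ^ (nat N + 2)"
    proof
      fix x
      have "f x = poly p (exp x ^ 2) / exp x ^ nat N" using 2 by simp
      also have "\<dots> = exp x ^ 2 * poly p (exp x ^ 2) / exp x ^ (nat N + 2)" by (rule aux_raise)
      also have "\<dots> = poly (pCons 0 p) (exp x ^ 2) / exp x ^ (nat N + 2)"
        by (simp only: poly_pCons add_0_left)
      finally show "f x = poly (pCons 0 p) (exp x ^ 2) / exp x ^ (nat N + 2)" .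
    qed
    ultimately show ?thesis unfolding Cls_def by metis
  qed
qed

lemma sinh_cx: "sinh (z::complex) = (exp z - exp (-z)) / 2"
  by (rule sinh_field_def)

lemma aux_field: "(e::complex) \<noteq> 0 \<Longrightarrow> k \<noteq> 0 \<Longrightarrow>
   (e * k - inverse (e * k)) / 2 = (- (inverse k / 2) + e * e * (k / 2)) / e"
  by (simp add: field_simps)

lemma cls_sinh: "Cls 1 (\<lambda>x. sinh (x + c))"
proof -
  have "\<forall>x. sinh (x + c) = poly [:-(inverse (exp c)/2), exp c/2:] (exp x ^ 2) / exp x ^ nat 1"
  proof
    fix x
    have "sinh (x + c) = (exp x * exp c - inverse (exp x * exp c)) / 2"
      by (simp only: sinh_cx exp_add exp_minus)
    also have "\<dots> = (- (inverse (exp c) / 2) + exp x * exp x * (exp c / 2)) / exp x"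
      by (rule aux_field) auto
    finally show "sinh (x + c) = poly [:-(inverse (exp c)/2), exp c/2:] (exp x ^ 2) / exp x ^ nat 1"
      by (simp add: power2_eq_square)
  qed
  moreover have "int (degree [:-(inverse (exp c)/2), exp c/2:]) \<le> 1" by simp
  ultimately show ?thesis unfolding Cls_def by blast
qed

lemma cls_Rmat_eq: "i = k \<Longrightarrow> Cls 1 (\<lambda>x. Rmat \<gamma> (x + c) i j k l)"
proof -
  assume ik: "i = k"
  have eq: "(\<lambda>x. Rmat \<gamma> (x + c) i j k l) =
     (if j = l then (\<lambda>x. sinh (x + (c + (if i = j then \<gamma> else 0)))) else (\<lambda>_. 0))"
    using ik by (auto simp: Rmat_def fun_eq_iff add.assoc)
  show ?thesis unfolding eq by (simp add: cls_sinh cls_zero)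
qed

lemma cls_Rmat_ne: "i \<noteq> k \<Longrightarrow> Cls 0 (\<lambda>x. Rmat \<gamma> (x + c) i j k l)"
proof -
  assume ik: "i \<noteq> k"
  have eq: "(\<lambda>x. Rmat \<gamma> (x + c) i j k l) = (\<lambda>_. (if i \<noteq> j \<and> i = l \<and> j = k then sinh \<gamma> else 0))"
    using ik by (auto simp: Rmat_def fun_eq_iff)
  show ?thesis unfolding eq by (rule cls_const)
qed

definition dd :: "int \<Rightarrow> nat \<Rightarrow> nat \<Rightarrow> int" where
  "dd n a b = (if a = b then n else n - 1)"

definition good :: "int \<Rightarrow> (complex \<Rightarrow> op0Q) \<Rightarrow> bool" where
  "good n M \<longleftrightarrow> (\<forall>a\<in>{0,1}. \<forall>b\<in>{0,1}. \<forall>s s'. Cls (dd n a b) (\<lambda>x. M x a s b s'))"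

lemma cls_adj:
  assumes "a \<in> {0,1}" "b \<in> {0,1}" "a' \<in> {0,1}" "Cls (dd n a b + dd m b a') f"
  shows "Cls (dd (n + m) a a') f"
proof (cases "a = a' \<and> b \<noteq> a")
  case True
  then have "dd (n + m) a a' = (dd n a b + dd m b a') + 2" by (simp add: dd_def)
  then show ?thesis using cls_raise[OF assms(4)] by simp
next
  case False
  then have "dd (n + m) a a' = dd n a b + dd m b a'" using assms(1-3) by (auto simp: dd_def)
  then show ?thesis using assms(4) by simp
qed

lemma finite_qstates: "finite (qstates L)"
  unfolding qstates_def by (rule finite_PiE) auto

lemma good_mult:
  assumes X: "good n X" and Y: "good m Y"
  shows "good (n + m) (\<lambda>x. opmul L (X x) (Y x))"
  unfolding good_def
proof (intro ballI allI)
  fix a a' s s' assume a: "a \<in> {0::nat,1}" and a': "a' \<in> {0::nat,1}"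
  have part: "Cls (dd (n + m) a a') (\<lambda>x. \<Sum>t\<in>qstates L. X x a s b t * Y x b t a' s')"
    if b: "b \<in> {0,1}" for b
  proof (rule cls_adj[OF a b a'])
    show "Cls (dd n a b + dd m b a') (\<lambda>x. \<Sum>t\<in>qstates L. X x a s b t * Y x b t a' s')"
    proof (rule cls_sum[OF finite_qstates])
      fix t
      show "Cls (dd n a b + dd m b a') (\<lambda>x. X x a s b t * Y x b t a' s')"
        using X Y a a' b unfolding good_def by (intro cls_mult) auto
    qed
  qed
  have eq: "(\<lambda>x. opmul L (X x) (Y x) a s a' s') =
     (\<lambda>x. (\<Sum>t\<in>qstates L. X x a s 0 t * Y x 0 t a' s') + (\<Sum>t\<in>qstates L. X x a s 1 t * Y x 1 t a' s'))"
    by (simp add: opmul_def fun_eq_iff)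
  show "Cls (dd (n + m) a a') (\<lambda>x. opmul L (X x) (Y x) a s a' s')"
    unfolding eq by (intro cls_add part) auto
qed

lemma good_opid: "good 0 (\<lambda>x. opid)"
  unfolding good_def
proof (intro ballI allI)
  fix a b s s' assume "a \<in> {0::nat,1}" "b \<in> {0::nat,1}"
  show "Cls (dd 0 a b) (\<lambda>x. opid a s b s')"
  proof (cases "a = b")
    case True then show ?thesis by (simp add: dd_def opid_def cls_const)
  next
    case False then show ?thesis by (simp add: dd_def opid_def cls_zero)
  qed
qed

lemma good_R: "good 1 (\<lambda>x. R0j L \<gamma> j (x + c))"
  unfolding good_def
proof (intro ballI allI)
  fix a b s s' assume "a \<in> {0::nat,1}" "b \<in> {0::nat,1}"
  have eq: "(\<lambda>x. R0j L \<gamma> j (x + c) a s b s') =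
    (\<lambda>x. (if \<forall>k\<in>{1..L} - {j}. s k = s' k then 1 else 0) * Rmat \<gamma> (x + c) a (s j) b (s' j))"
    by (simp add: R0j_def fun_eq_iff mult.commute)
  show "Cls (dd 1 a b) (\<lambda>x. R0j L \<gamma> j (x + c) a s b s')"
  proof (cases "a = b")
    case True then show ?thesis unfolding eq by (simp add: dd_def cls_scale cls_Rmat_eq)
  next
    case False then show ?thesis unfolding eq by (simp add: dd_def cls_scale cls_Rmat_ne)
  qed
qed

lemma sinh_hm: "sinh (h - x) = (-1) * sinh (x + - h :: complex)"
proof -
  have e: "h - x = - (x + - h)" by simp
  have "sinh (h - x) = sinh (- (x + - h))" by (simp only: e)
  also have "\<dots> = - sinh (x + - h)" by (rule sinh_minus)
  finally show ?thesis by simp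
qed

lemma good_K: "good 1 (\<lambda>x. Kop h x)"
  unfolding good_def
proof (intro ballI allI)
  fix a b s s' assume ab: "a \<in> {0::nat,1}" "b \<in> {0::nat,1}"
  show "Cls (dd 1 a b) (\<lambda>x. Kop h x a s b s')"
  proof (cases "a = b \<and> s = s'")
    case True
    show ?thesis
    proof (cases "a = 0")
      case True
      have "(\<lambda>x. Kop h x a s b s') = (\<lambda>x. sinh (x + h))"
        using True \<open>a = b \<and> s = s'\<close> by (simp add: Kop_def fun_eq_iff add.commute)
      then show ?thesis using \<open>a = b \<and> s = s'\<close> by (simp add: dd_def cls_sinh)
    next
      case False
      have e: "(\<lambda>x. Kop h x a s b s') = (\<lambda>x. (-1) * sinh (x + - h))"
        using False \<open>a = b \<and> s = s'\<close> proof (intro ext)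
        fix x show "Kop h x a s b s' = (-1) * sinh (x + - h)"
          using False \<open>a = b \<and> s = s'\<close> sinh_hm[of h x] by (simp add: Kop_def)
      qed
      have d: "dd 1 a b = 1" using \<open>a = b \<and> s = s'\<close> by (simp add: dd_def)
      show ?thesis unfolding e d by (rule cls_scale[OF cls_sinh])
    qed
  next
    case False
    then have "(\<lambda>x. Kop h x a s b s') = (\<lambda>_. 0)" by (auto simp: Kop_def fun_eq_iff)
    then show ?thesis by (simp add: cls_zero)
  qed
qed

lemma good_tau_aux: "good (int n) (\<lambda>x. tau_aux L \<gamma> \<mu> x n)"
proof (induction n)
  case 0 then show ?case by (simp add: good_opid)
next
  case (Suc n)
  have "good (1 + int n) (\<lambda>x. opmul L (R0j L \<gamma> (Suc n) (x + - \<mu> (Suc n))) (tau_aux L \<gamma> \<mu> x n))"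
    by (rule good_mult[OF good_R Suc.IH])
  then show ?case by simp
qed

lemma good_taubar_aux: "good (int n) (\<lambda>x. taubar_aux L \<gamma> \<mu> x n)"
proof (induction n)
  case 0 then show ?case by (simp add: good_opid)
next
  case (Suc n)
  have "good (int n + 1) (\<lambda>x. opmul L (taubar_aux L \<gamma> \<mu> x n) (R0j L \<gamma> (Suc n) (x + \<mu> (Suc n))))"
    by (rule good_mult[OF Suc.IH good_R])
  then show ?case by (simp add: add.commute)
qed

lemma good_T: "good (int L + 1 + int L) (\<lambda>x. Tmon L \<gamma> h \<mu> x)"
  unfolding Tmon_def tau_def taubar_def
  by (intro good_mult good_tau_aux good_taubar_aux good_K)

lemma exp2: "exp (2 * (x::complex)) = exp x ^ 2"
  by (rule exp_double)

lemma B_poly: "\<exists>p. degree p \<le> 2*L \<and> (\<forall>x. Bop L \<gamma> h \<mu> x s s' = poly p (exp (2*x)) / exp (2*x) ^ L)"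
proof -
  have "Cls (dd (int L + 1 + int L) 0 1) (\<lambda>x. Tmon L \<gamma> h \<mu> x 0 s 1 s')"
    using good_T[of L \<gamma> h \<mu>] unfolding good_def by auto
  moreover have "dd (int L + 1 + int L) 0 1 = int (2 * L)" by (simp add: dd_def)
  ultimately have C: "Cls (int (2*L)) (\<lambda>x. Bop L \<gamma> h \<mu> x s s')"
    by (simp add: Bop_def)
  from C consider "(\<lambda>x. Bop L \<gamma> h \<mu> x s s') = (\<lambda>_. 0)"
    | p where "int (degree p) \<le> int (2*L)" "\<forall>x. Bop L \<gamma> h \<mu> x s s' = poly p (exp x ^ 2) / exp x ^ nat (int (2*L))"
    unfolding Cls_def by blast
  then show ?thesis
  proof cases
    case 1
    then show ?thesis by (intro exI[of _ 0]) (simp add: fun_eq_iff)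
  next
    case 2
    then show ?thesis by (intro exI[of _ p]) (simp add: exp2 power_mult del: of_nat_mult)
  qed
qed

definition MP :: "nat \<Rightarrow> nat \<Rightarrow> ((nat \<Rightarrow> complex) \<Rightarrow> complex) \<Rightarrow> bool" where
  "MP L n F \<longleftrightarrow> (\<exists>c :: (nat \<Rightarrow> nat) \<Rightarrow> complex. \<forall>lam.
     F lam = (\<Sum>e\<in>{1..n} \<rightarrow>\<^sub>E {0..2*L}. c e * (\<Prod>i=1..n. exp (2 * lam i) ^ e i))
             * (\<Prod>i=1..n. inverse (exp (2 * lam i) ^ L)))"

lemma MP_zero: "MP L n (\<lambda>_. 0)"
  unfolding MP_def by (rule exI[of _ "\<lambda>_. 0"]) simp

lemma MP_add: assumes "MP L n F" "MP L n G" shows "MP L n (\<lambda>lam. F lam + G lam)"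
proof -
  obtain c1 c2 where c1: "\<forall>lam. F lam = (\<Sum>e\<in>{1..n} \<rightarrow>\<^sub>E {0..2*L}. c1 e * (\<Prod>i=1..n. exp (2 * lam i) ^ e i))
             * (\<Prod>i=1..n. inverse (exp (2 * lam i) ^ L))"
    and c2: "\<forall>lam. G lam = (\<Sum>e\<in>{1..n} \<rightarrow>\<^sub>E {0..2*L}. c2 e * (\<Prod>i=1..n. exp (2 * lam i) ^ e i))
             * (\<Prod>i=1..n. inverse (exp (2 * lam i) ^ L))"
    using assms unfolding MP_def by blast
  show ?thesis unfolding MP_def
    by (rule exI[of _ "\<lambda>e. c1 e + c2 e"]) (simp add: c1 c2 sum.distrib distrib_right)
qed

lemma MP_sum: "finite S \<Longrightarrow> (\<And>t. t \<in> S \<Longrightarrow> MP L n (F t)) \<Longrightarrow> MP L n (\<lambda>lam. \<Sum>t\<in>S. F t lam)"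
proof (induction S rule: finite_induct)
  case empty then show ?case by (simp add: MP_zero)
next
  case (insert a S) then show ?case by (simp add: MP_add)
qed

lemma MP_const: "MP L 0 (\<lambda>_. k)"
  unfolding MP_def by (rule exI[of _ "\<lambda>_. k"]) simp

lemma poly_sum_deg:
  fixes p :: "complex poly" and z :: complex
  assumes "degree p \<le> N"
  shows "poly p z = (\<Sum>y\<in>{0..N}. coeff p y * z ^ y)"
proof -
  have "poly p z = (\<Sum>y\<le>degree p. coeff p y * z ^ y)" by (rule poly_altdef)
  also have "\<dots> = (\<Sum>y\<le>N. coeff p y * z ^ y)"
    by (rule sum.mono_neutral_left) (use assms in \<open>auto simp: coeff_eq_0\<close>)
  finally show ?thesis by (simp add: atLeast0AtMost)
qed

lemma MP_step:
  assumes "MP L n F" "degree p \<le> 2*L"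
  shows "MP L (Suc n) (\<lambda>lam. F lam * (poly p (exp (2 * lam (Suc n))) / exp (2 * lam (Suc n)) ^ L))"
proof -
  obtain c where c: "\<forall>lam. F lam = (\<Sum>e\<in>{1..n} \<rightarrow>\<^sub>E {0..2*L}. c e * (\<Prod>i=1..n. exp (2 * lam i) ^ e i))
             * (\<Prod>i=1..n. inverse (exp (2 * lam i) ^ L))"
    using assms unfolding MP_def by blast
  define c' where "c' e = c (e(Suc n := undefined)) * coeff p (e (Suc n))" for e :: "nat \<Rightarrow> nat"
  show ?thesis unfolding MP_def
  proof (intro exI[of _ c'] allI)
    fix lam :: "nat \<Rightarrow> complex"
    define X where "X i = exp (2 * lam i)" for i
    define A where "A = {0..2*L}"
    have ins: "{1..Suc n} = insert (Suc n) {1..n}" by auto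
    have nin: "Suc n \<notin> {1..n}" by simp
    have I: "(\<Prod>i=1..Suc n. inverse (X i ^ L)) = inverse (X (Suc n) ^ L) * (\<Prod>i=1..n. inverse (X i ^ L))"
      unfolding ins by (simp add: nin)
    have P: "poly p (X (Suc n)) = (\<Sum>y\<in>A. coeff p y * X (Suc n) ^ y)"
      unfolding A_def by (rule poly_sum_deg[OF assms(2)])
    define G where "G e = c' e * (\<Prod>i=1..Suc n. X i ^ e i)" for e
    have "(\<Sum>e\<in>{1..Suc n} \<rightarrow>\<^sub>E A. G e) = (\<Sum>e\<in>(\<lambda>(y, g). g(Suc n := y)) ` (A \<times> ({1..n} \<rightarrow>\<^sub>E A)). G e)"
      unfolding ins PiE_insert_eq by simp
    also have "\<dots> = (\<Sum>yg\<in>A \<times> ({1..n} \<rightarrow>\<^sub>E A). G ((\<lambda>(y, g). g(Suc n := y)) yg))"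
      by (subst sum.reindex[OF inj_combinator[OF nin]]) (simp add: o_def)
    also have "\<dots> = (\<Sum>(y,g)\<in>A \<times> ({1..n} \<rightarrow>\<^sub>E A). (coeff p y * X (Suc n) ^ y) * (c g * (\<Prod>i=1..n. X i ^ g i)))"
    proof (rule sum.cong[OF refl], clarify)
      fix y g assume y: "y \<in> A" and g: "g \<in> {1..n} \<rightarrow>\<^sub>E A"
      have gu: "g (Suc n) = undefined" using g nin by (auto simp: PiE_def extensional_def)
      have g1: "g(Suc n := y, Suc n := undefined) = g" using gu by (auto simp: fun_eq_iff)
      have pr: "(\<Prod>i=1..Suc n. X i ^ (g(Suc n := y)) i) = X (Suc n) ^ y * (\<Prod>i=1..n. X i ^ g i)"
      proof -
        have "(\<Prod>i=1..Suc n. X i ^ (g(Suc n := y)) i) = X (Suc n) ^ y * (\<Prod>i\<in>{1..n}. X i ^ (g(Suc n := y)) i)"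
          unfolding ins by (simp add: nin)
        also have "(\<Prod>i\<in>{1..n}. X i ^ (g(Suc n := y)) i) = (\<Prod>i\<in>{1..n}. X i ^ g i)"
          by (rule prod.cong) auto
        finally show ?thesis .
      qed
      show "G (g(Suc n := y)) = coeff p y * X (Suc n) ^ y * (c g * (\<Prod>i=1..n. X i ^ g i))"
        unfolding G_def c'_def pr g1 by simp
    qed
    also have "\<dots> = (\<Sum>y\<in>A. \<Sum>g\<in>{1..n} \<rightarrow>\<^sub>E A. (coeff p y * X (Suc n) ^ y) * (c g * (\<Prod>i=1..n. X i ^ g i)))"
      by (rule sum.cartesian_product[symmetric])
    also have "\<dots> = (\<Sum>y\<in>A. coeff p y * X (Suc n) ^ y) * (\<Sum>g\<in>{1..n} \<rightarrow>\<^sub>E A. c g * (\<Prod>i=1..n. X i ^ g i))"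
      by (rule sum_product[symmetric])
    finally have S: "(\<Sum>e\<in>{1..Suc n} \<rightarrow>\<^sub>E A. G e) = poly p (X (Suc n)) * (\<Sum>g\<in>{1..n} \<rightarrow>\<^sub>E A. c g * (\<Prod>i=1..n. X i ^ g i))"
      unfolding P .
    have "F lam * (poly p (X (Suc n)) / X (Suc n) ^ L) =
       (\<Sum>e\<in>{1..Suc n} \<rightarrow>\<^sub>E A. G e) * (\<Prod>i=1..Suc n. inverse (X i ^ L))"
      unfolding S I using c by (simp add: X_def A_def divide_inverse mult_ac)
    then show "F lam * (poly p (exp (2 * lam (Suc n))) / exp (2 * lam (Suc n)) ^ L) =
      (\<Sum>e\<in>{1..Suc n} \<rightarrow>\<^sub>E {0..2 * L}. c' e * (\<Prod>i = 1..Suc n. exp (2 * lam i) ^ e i)) *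
      (\<Prod>i = 1..Suc n. inverse (exp (2 * lam i) ^ L))"
      by (simp add: X_def A_def G_def)
  qed
qed

lemma MP_Bprod: "MP L n (\<lambda>lam. Bprod L \<gamma> h \<mu> lam n s s')"
proof (induction n arbitrary: s')
  case 0 then show ?case by (simp add: MP_const)
next
  case (Suc n)
  have eq: "(\<lambda>lam. Bprod L \<gamma> h \<mu> lam (Suc n) s s') =
    (\<lambda>lam. \<Sum>t\<in>qstates L. Bprod L \<gamma> h \<mu> lam n s t * Bop L \<gamma> h \<mu> (lam (Suc n)) t s')"
    by (simp add: qmul_def fun_eq_iff)
  show ?case unfolding eq
  proof (rule MP_sum[OF finite_qstates])
    fix t
    obtain p where p: "degree p \<le> 2*L" "\<forall>x. Bop L \<gamma> h \<mu> x t s' = poly p (exp (2*x)) / exp (2*x) ^ L"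
      using B_poly by blast
    have "MP L (Suc n) (\<lambda>lam. Bprod L \<gamma> h \<mu> lam n s t * (poly p (exp (2 * lam (Suc n))) / exp (2 * lam (Suc n)) ^ L))"
      by (rule MP_step[OF Suc.IH p(1)])
    then show "MP L (Suc n) (\<lambda>lam. Bprod L \<gamma> h \<mu> lam n s t * Bop L \<gamma> h \<mu> (lam (Suc n)) t s')"
      using p(2) by simp
  qed
qed

theorem lemma1:
  fixes L :: nat and \<gamma> h :: complex and \<mu> :: "nat \<Rightarrow> complex"
  assumes "L > 0"
  shows "\<exists>c :: (nat \<Rightarrow> nat) \<Rightarrow> complex. \<forall>lam :: nat \<Rightarrow> complex.
           Zpf L \<gamma> h \<mu> lam =
             (\<Sum>e\<in>{1..L} \<rightarrow>\<^sub>E {0..2*L}. c e * (\<Prod>i=1..L. exp (2 * lam i) ^ e i))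
             * (\<Prod>i=1..L. inverse (exp (2 * lam i) ^ L))"
  using MP_Bprod[of L L \<gamma> h \<mu> "restrict (\<lambda>j. 1) {1..L}" "restrict (\<lambda>j. 0) {1..L}"]
  unfolding MP_def Zpf_def by blast

end
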